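(* Let $\mathcal{G}$ be an $n$-dimensional real Lie algebra with basis $\{e_i\}_{1\le i\le n}$ and structure constants $[e_i,e_j]=\sum_k c_{ij}^k e_k$, and let $(x_1,\dots,x_n)$ be the linear coordinates on $\mathcal{G}^*$ with respect to the dual basis $\{e^i\}$. Equip $\mathcal{G}^*$ with the Lie-Poisson structure $\pi^{ij}(x_ue^u)=\sum_k c_{ij}^k x_k$ and the volume form $dx_1\wedge\dots\wedge dx_n$. Then a function $f\in C^\infty(\mathcal{G}^* )$ is a last multiplier of its Hamiltonian vector field $A_f$ if and only if $$\sum_{i,j=1}^n c_{ij}^j\frac{\partial f}{\partial x_i}=0.$$
   Context: The Poisson bracket is $\{g,h\}=\sum_{i,j}\pi^{ij}\frac{\partial g}{\partial x_i}\frac{\partial h}{\partial x_j}$, and for $h\in C^\infty(\mathcal{G}^* )$ the Hamiltonian vector field is defined by $A_h(g)=\{h,g\}$. For a vector field $A$, $\operatorname{div}A$ is defined by $L_A V=(\operatorname{div}A)V$ with $V=dx_1\wedge\dots\wedge dx_n$. A function $m$ is a last multiplier of $A$ if $d(m\,i_AV)=0$, equivalently $A(m)+m\operatorname{div}A=0$. *)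

theory Defs
  imports "HOL-Analysis.Analysis"
begin

text \<open>Coordinates on the dual space: a point of G* is x :: real ^ 'n, with
  x $ i the i-th linear coordinate. Partial derivative along x_i.\<close>

definition pd :: "'n::finite \<Rightarrow> (real ^ 'n \<Rightarrow> real) \<Rightarrow> real ^ 'n \<Rightarrow> real" where
  "pd i g x = deriv (\<lambda>t. g (x + t *\<^sub>R axis i 1)) 0"

fun iter_pd :: "'n::finite list \<Rightarrow> (real ^ 'n \<Rightarrow> real) \<Rightarrow> real ^ 'n \<Rightarrow> real" where
  "iter_pd [] g = g"
| "iter_pd (i # is) g = pd i (iter_pd is g)"

definition smooth :: "(real ^ 'n::finite \<Rightarrow> real) \<Rightarrow> bool" where
  "smooth g \<longleftrightarrow> (\<forall>is. iter_pd is g differentiable_on UNIV)"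

text \<open>Lie algebra structure constants: [e_i,e_j] = sum_k c i j k e_k.\<close>
definition lie_structure_constants :: "('n::finite \<Rightarrow> 'n \<Rightarrow> 'n \<Rightarrow> real) \<Rightarrow> bool" where
  "lie_structure_constants c \<longleftrightarrow>
     (\<forall>i j k. c i j k = - c j i k) \<and>
     (\<forall>i j k m. (\<Sum>l\<in>UNIV. c i j l * c l k m + c j k l * c l i m + c k i l * c l j m) = 0)"

definition lie_poisson :: "('n::finite \<Rightarrow> 'n \<Rightarrow> 'n \<Rightarrow> real) \<Rightarrow> 'n \<Rightarrow> 'n \<Rightarrow> real ^ 'n \<Rightarrow> real" where
  "lie_poisson c i j x = (\<Sum>k\<in>UNIV. c i j k * x $ k)"

definition poisson_bracket ::
  "('n::finite \<Rightarrow> 'n \<Rightarrow> 'n \<Rightarrow> real) \<Rightarrow> (real ^ 'n \<Rightarrow> real) \<Rightarrow> (real ^ 'n \<Rightarrow> real) \<Rightarrow> real ^ 'n \<Rightarrow> real" where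
  "poisson_bracket c g h x = (\<Sum>i\<in>UNIV. \<Sum>j\<in>UNIV. lie_poisson c i j x * pd i g x * pd j h x)"

text \<open>A vector field is given by its component functions: A = sum_j A j d/dx_j.\<close>
type_synonym 'n vfield = "'n \<Rightarrow> real ^ 'n \<Rightarrow> real"

definition vf_apply :: "'n::finite vfield \<Rightarrow> (real ^ 'n \<Rightarrow> real) \<Rightarrow> real ^ 'n \<Rightarrow> real" where
  "vf_apply A g x = (\<Sum>j\<in>UNIV. A j x * pd j g x)"

text \<open>Hamiltonian vector field A_h, A_h(g) = {h,g}: component j is sum_i pi^{ij} dh/dx_i.\<close>
definition hamiltonian_vf :: "('n::finite \<Rightarrow> 'n \<Rightarrow> 'n \<Rightarrow> real) \<Rightarrow> (real ^ 'n \<Rightarrow> real) \<Rightarrow> 'n vfield" where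
  "hamiltonian_vf c h = (\<lambda>j x. \<Sum>i\<in>UNIV. lie_poisson c i j x * pd i h x)"

text \<open>Divergence w.r.t. the volume dx_1 ^ ... ^ dx_n: L_A V = (div A) V,
  which in linear coordinates is sum_j d A_j / dx_j.\<close>
definition divergence :: "'n::finite vfield \<Rightarrow> real ^ 'n \<Rightarrow> real" where
  "divergence A x = (\<Sum>j\<in>UNIV. pd j (A j) x)"

definition last_multiplier :: "'n::finite vfield \<Rightarrow> (real ^ 'n \<Rightarrow> real) \<Rightarrow> bool" where
  "last_multiplier A m \<longleftrightarrow> (\<forall>x. vf_apply A m x + m x * divergence A x = 0)"

end

theory Submission
  imports Defs
begin

lemma line_deriv:
  fixes g :: "real ^ 'n::finite \<Rightarrow> real"
  assumes "(g has_derivative D) (at (y + t0 *\<^sub>R v))"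
  shows "((\<lambda>t. g (y + t *\<^sub>R v)) has_real_derivative D v) (at t0)"
proof -
  have l: "((\<lambda>t. y + t *\<^sub>R v) has_derivative (\<lambda>t. t *\<^sub>R v)) (at t0)"
    by (auto intro!: derivative_eq_intros)
  have "((g \<circ> (\<lambda>t. y + t *\<^sub>R v)) has_derivative (D \<circ> (\<lambda>t. t *\<^sub>R v))) (at t0)"
    using diff_chain_at[OF l assms] .
  moreover have "(D \<circ> (\<lambda>t. t *\<^sub>R v)) = (*) (D v)"
    using has_derivative_linear[OF assms] by (auto simp: linear_scale o_def fun_eq_iff)
  ultimately show ?thesis unfolding has_field_derivative_def by (simp add: o_def)
qed

lemma pd_eq:
  fixes g :: "real ^ 'n::finite \<Rightarrow> real"
  assumes "(g has_derivative D) (at p)"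
  shows "pd i g p = D (axis i 1)"
proof -
  have "((\<lambda>t. g (p + t *\<^sub>R axis i 1)) has_real_derivative D (axis i 1)) (at 0)"
    by (rule line_deriv) (use assms in simp)
  then show ?thesis unfolding pd_def by (rule DERIV_imp_deriv)
qed

lemma pd_deriv:
  fixes g :: "real ^ 'n::finite \<Rightarrow> real"
  assumes "g differentiable (at (y + t0 *\<^sub>R axis i 1))"
  shows "((\<lambda>t. g (y + t *\<^sub>R axis i 1)) has_real_derivative pd i g (y + t0 *\<^sub>R axis i 1)) (at t0)"
proof -
  obtain D where D: "(g has_derivative D) (at (y + t0 *\<^sub>R axis i 1))"
    using assms unfolding differentiable_def by blast
  show ?thesis using line_deriv[OF D] pd_eq[OF D] by simp
qed

lemma lp_line: "lie_poisson c i j (x + t *\<^sub>R axis m 1) = lie_poisson c i j x + t * c i j m"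
proof -
  have "(\<Sum>k\<in>UNIV. c i j k * (x + t *\<^sub>R axis m 1) $ k)
      = (\<Sum>k\<in>UNIV. c i j k * x $ k + (if k = m then t * c i j m else 0))"
    by (rule sum.cong) (auto simp: axis_def algebra_simps)
  also have "\<dots> = (\<Sum>k\<in>UNIV. c i j k * x $ k) + t * c i j m"
    by (simp add: sum.distrib)
  finally show ?thesis unfolding lie_poisson_def .
qed

lemma delta_mvt:
  fixes f :: "real ^ 'n::finite \<Rightarrow> real"
  assumes df: "\<And>p. f differentiable (at p)" and dfi: "\<And>p. pd i f differentiable (at p)"
    and h: "h > 0"
  shows "\<exists>t s. 0 < t \<and> t < h \<and> 0 < s \<and> s < h \<and>
    f (x + h *\<^sub>R axis i 1 + h *\<^sub>R axis j 1) - f (x + h *\<^sub>R axis i 1) - f (x + h *\<^sub>R axis j 1) + f x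
      = h^2 * pd j (pd i f) (x + t *\<^sub>R axis i 1 + s *\<^sub>R axis j 1)"
proof -
  define e :: "real ^ 'n" where "e = axis i 1"
  define u :: "real ^ 'n" where "u = axis j 1"
  define \<phi> where "\<phi> t = f ((x + h *\<^sub>R u) + t *\<^sub>R e) - f (x + t *\<^sub>R e)" for t
  have "DERIV \<phi> t :> pd i f ((x + h *\<^sub>R u) + t *\<^sub>R e) - pd i f (x + t *\<^sub>R e)" for t
    unfolding \<phi>_def e_def
    by (intro DERIV_diff pd_deriv df)
  then obtain t1 where t1: "0 < t1" "t1 < h"
    "\<phi> h - \<phi> 0 = (h - 0) * (pd i f ((x + h *\<^sub>R u) + t1 *\<^sub>R e) - pd i f (x + t1 *\<^sub>R e))"
    using MVT2[OF h, of \<phi> "\<lambda>t. pd i f ((x + h *\<^sub>R u) + t *\<^sub>R e) - pd i f (x + t *\<^sub>R e)"] by blast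
  define \<psi> where "\<psi> s = pd i f ((x + t1 *\<^sub>R e) + s *\<^sub>R u)" for s
  have "DERIV \<psi> s :> pd j (pd i f) ((x + t1 *\<^sub>R e) + s *\<^sub>R u)" for s
    unfolding \<psi>_def u_def
    by (intro pd_deriv dfi)
  then obtain s1 where s1: "0 < s1" "s1 < h"
    "\<psi> h - \<psi> 0 = (h - 0) * pd j (pd i f) ((x + t1 *\<^sub>R e) + s1 *\<^sub>R u)"
    using MVT2[OF h, of \<psi> "\<lambda>s. pd j (pd i f) ((x + t1 *\<^sub>R e) + s *\<^sub>R u)"] by blast
  have "(x + h *\<^sub>R u) + t1 *\<^sub>R e = (x + t1 *\<^sub>R e) + h *\<^sub>R u" by (simp add: algebra_simps)
  then have "pd i f ((x + h *\<^sub>R u) + t1 *\<^sub>R e) - pd i f (x + t1 *\<^sub>R e) = \<psi> h - \<psi> 0"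
    unfolding \<psi>_def by (simp only: scale_zero_left add_0_right)
  have "x + h *\<^sub>R u + h *\<^sub>R e = x + h *\<^sub>R e + h *\<^sub>R u" by (simp add: algebra_simps)
  then have "f (x + h *\<^sub>R e + h *\<^sub>R u) - f (x + h *\<^sub>R e) - f (x + h *\<^sub>R u) + f x = \<phi> h - \<phi> 0"
    unfolding \<phi>_def by (simp only: scale_zero_left add_0_right)
  also have "\<dots> = h * (\<psi> h - \<psi> 0)"
    using t1(3) \<open>pd i f ((x + h *\<^sub>R u) + t1 *\<^sub>R e) - pd i f (x + t1 *\<^sub>R e) = \<psi> h - \<psi> 0\<close> by simp
  also have "\<dots> = h^2 * pd j (pd i f) ((x + t1 *\<^sub>R e) + s1 *\<^sub>R u)"
    using s1(3) by (simp add: power2_eq_square)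
  finally show ?thesis using t1 s1 unfolding e_def u_def by blast
qed

lemma aux3: "\<bar>a - p\<bar> < \<bar>p - q\<bar> / 2 \<Longrightarrow> \<bar>b - q\<bar> < \<bar>p - q\<bar> / 2 \<Longrightarrow> a = (b::real) \<Longrightarrow> False"
  by (simp add: abs_if split: if_splits)

lemma schwarz:
  fixes f :: "real ^ 'n::finite \<Rightarrow> real"
  assumes df: "\<And>p. f differentiable (at p)" and dfi: "\<And>i p. pd i f differentiable (at p)"
    and dfij: "\<And>i j p. pd j (pd i f) differentiable (at p)"
  shows "pd j (pd i f) x = pd i (pd j f) x"
proof (rule ccontr)
  assume ne: "pd j (pd i f) x \<noteq> pd i (pd j f) x"
  define d where "d = \<bar>pd j (pd i f) x - pd i (pd j f) x\<bar>"
  have d: "d > 0" using ne unfolding d_def by simp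
  have c1: "continuous (at x) (pd j (pd i f))" "continuous (at x) (pd i (pd j f))"
    using dfij differentiable_imp_continuous_within by blast+
  obtain r1 where r1: "r1 > 0" "\<And>y. dist y x < r1 \<Longrightarrow> dist (pd j (pd i f) y) (pd j (pd i f) x) < d/2"
    using c1(1) d unfolding continuous_at_eps_delta by (meson half_gt_zero)
  obtain r2 where r2: "r2 > 0" "\<And>y. dist y x < r2 \<Longrightarrow> dist (pd i (pd j f) y) (pd i (pd j f) x) < d/2"
    using c1(2) d unfolding continuous_at_eps_delta by (meson half_gt_zero)
  define h where "h = min r1 r2 / 4"
  have h: "h > 0" using r1 r2 unfolding h_def by simp
  obtain t s where ts: "0 < t" "t < h" "0 < s" "s < h"
    "f (x + h *\<^sub>R axis i 1 + h *\<^sub>R axis j 1) - f (x + h *\<^sub>R axis i 1) - f (x + h *\<^sub>R axis j 1) + f x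
      = h^2 * pd j (pd i f) (x + t *\<^sub>R axis i 1 + s *\<^sub>R axis j 1)"
    using delta_mvt[OF df dfi h] by blast
  obtain t' s' where ts': "0 < t'" "t' < h" "0 < s'" "s' < h"
    "f (x + h *\<^sub>R axis j 1 + h *\<^sub>R axis i 1) - f (x + h *\<^sub>R axis j 1) - f (x + h *\<^sub>R axis i 1) + f x
      = h^2 * pd i (pd j f) (x + t' *\<^sub>R axis j 1 + s' *\<^sub>R axis i 1)"
    using delta_mvt[OF df dfi h] by blast
  have "x + h *\<^sub>R axis j 1 + h *\<^sub>R axis i 1 = x + h *\<^sub>R axis i 1 + h *\<^sub>R axis j 1"
    by (simp add: algebra_simps)
  then have "h^2 * pd j (pd i f) (x + t *\<^sub>R axis i 1 + s *\<^sub>R axis j 1)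
      = h^2 * pd i (pd j f) (x + t' *\<^sub>R axis j 1 + s' *\<^sub>R axis i 1)"
    using ts(5) ts'(5) by (simp add: algebra_simps)
  then have eq: "pd j (pd i f) (x + t *\<^sub>R axis i 1 + s *\<^sub>R axis j 1)
      = pd i (pd j f) (x + t' *\<^sub>R axis j 1 + s' *\<^sub>R axis i 1)"
    using h by simp
  have nb: "dist (x + a *\<^sub>R axis k 1 + b *\<^sub>R axis l 1) x < 2 * h"
    if "0 < a" "a < h" "0 < b" "b < h" for a b and k l :: 'n
  proof -
    have "dist (x + a *\<^sub>R axis k 1 + b *\<^sub>R axis l 1) x = norm (a *\<^sub>R axis k 1 + b *\<^sub>R axis l (1::real) :: real ^ 'n)"
      by (simp add: dist_norm)
    also have "\<dots> \<le> norm (a *\<^sub>R (axis k 1 :: real ^ 'n)) + norm (b *\<^sub>R (axis l 1 :: real ^ 'n))"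
      by (rule norm_triangle_ineq)
    also have "\<dots> = a + b" using that by simp
    finally show ?thesis using that by simp
  qed
  have "2 * h < r1" "2 * h < r2" using r1 r2 unfolding h_def by auto
  then have A: "dist (pd j (pd i f) (x + t *\<^sub>R axis i 1 + s *\<^sub>R axis j 1)) (pd j (pd i f) x) < d/2"
    and B: "dist (pd i (pd j f) (x + t' *\<^sub>R axis j 1 + s' *\<^sub>R axis i 1)) (pd i (pd j f) x) < d/2"
    using r1(2) r2(2) nb[OF ts(1-4)] nb[OF ts'(1-4)] by (meson less_trans)+
  show False using aux3[OF A[unfolded d_def dist_real_def] B[unfolded d_def dist_real_def] eq] .
qed

lemma div_formula:
  fixes f :: "real ^ 'n::finite \<Rightarrow> real"
  assumes dfi: "\<And>i p. pd i f differentiable (at p)"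
  shows "pd j (hamiltonian_vf c f j) x
     = (\<Sum>i\<in>UNIV. c i j j * pd i f x + lie_poisson c i j x * pd j (pd i f) x)"
proof -
  have "((\<lambda>t. hamiltonian_vf c f j (x + t *\<^sub>R axis j 1)) has_real_derivative
      (\<Sum>i\<in>UNIV. c i j j * pd i f x + lie_poisson c i j x * pd j (pd i f) x)) (at 0)"
    unfolding hamiltonian_vf_def
  proof (rule DERIV_sum)
    fix i
    have L: "((\<lambda>t. lie_poisson c i j (x + t *\<^sub>R axis j 1)) has_real_derivative c i j j) (at 0)"
      by (simp add: lp_line) (auto intro!: derivative_eq_intros)
    have P: "((\<lambda>t. pd i f (x + t *\<^sub>R axis j 1)) has_real_derivative pd j (pd i f) x) (at 0)"
      using pd_deriv[of "pd i f" x 0 j] dfi by simp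
    show "((\<lambda>t. lie_poisson c i j (x + t *\<^sub>R axis j 1) * pd i f (x + t *\<^sub>R axis j 1))
        has_real_derivative c i j j * pd i f x + lie_poisson c i j x * pd j (pd i f) x) (at 0)"
      by (rule DERIV_cong[OF DERIV_mult[OF L P]]) simp
  qed
  then show ?thesis unfolding pd_def by (rule DERIV_imp_deriv)
qed

lemma antisym_sum:
  fixes P F :: "'n::finite \<Rightarrow> 'n \<Rightarrow> real"
  assumes "\<And>i j. P i j = - P j i" "\<And>i j. F i j = F j i"
  shows "(\<Sum>i\<in>UNIV. \<Sum>j\<in>UNIV. P i j * F i j) = 0"
proof -
  have "(\<Sum>i\<in>UNIV. \<Sum>j\<in>UNIV. P i j * F i j) = (\<Sum>j\<in>UNIV. \<Sum>i\<in>UNIV. P i j * F i j)"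
    by (rule sum.swap)
  also have "\<dots> = (\<Sum>j\<in>UNIV. \<Sum>i\<in>UNIV. - (P j i * F j i))"
    by (rule sum.cong[OF refl], rule sum.cong[OF refl]) (metis assms mult_minus_left)
  also have "\<dots> = - (\<Sum>j\<in>UNIV. \<Sum>i\<in>UNIV. P j i * F j i)"
    by (simp add: sum_negf)
  finally show ?thesis by simp
qed

lemma zero_region:
  fixes f :: "real ^ 'n::finite \<Rightarrow> real" and a :: "'n \<Rightarrow> real"
  assumes dfi: "\<And>i p. pd i f differentiable (at p)"
    and z: "\<And>x. f x * (\<Sum>i\<in>UNIV. a i * pd i f x) = 0"
  shows "(\<Sum>i\<in>UNIV. a i * pd i f x0) = 0"
proof (rule ccontr)
  define G where "G x = (\<Sum>i\<in>UNIV. a i * pd i f x)" for x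
  assume "(\<Sum>i\<in>UNIV. a i * pd i f x0) \<noteq> 0"
  then have G0: "G x0 \<noteq> 0" unfolding G_def .
  have ci: "continuous (at x0) (pd i f)" for i
    using dfi differentiable_imp_continuous_within by blast
  have "continuous (at x0) G" unfolding G_def
    by (intro continuous_intros ci)
  then obtain r where r: "r > 0" "\<And>y. dist y x0 < r \<Longrightarrow> dist (G y) (G x0) < \<bar>G x0\<bar>"
    using G0 unfolding continuous_at_eps_delta by (meson zero_less_abs_iff)
  have fz: "f y = 0" if "y \<in> ball x0 r" for y
  proof -
    have "G y \<noteq> 0" using r(2)[of y] that by (auto simp: dist_commute dist_real_def)
    then show ?thesis using z[of y] unfolding G_def by simp
  qed
  have "(f has_derivative (\<lambda>_. 0)) (at x0)"
    by (rule has_derivative_transform_within_open[of "\<lambda>_. 0" _ _ _ "ball x0 r"])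
       (use r fz in auto)
  then have "pd i f x0 = 0" for i using pd_eq by fastforce
  then have "G x0 = 0" unfolding G_def by simp
  with G0 show False by simp
qed

theorem proposition2p6:
  fixes c :: "'n::finite \<Rightarrow> 'n \<Rightarrow> 'n \<Rightarrow> real" and f :: "real ^ 'n \<Rightarrow> real"
  assumes "lie_structure_constants c"
    and "smooth f"
  shows "last_multiplier (hamiltonian_vf c f) f \<longleftrightarrow>
           (\<forall>x. (\<Sum>i\<in>UNIV. \<Sum>j\<in>UNIV. c i j j * pd i f x) = 0)"
proof -
  have ca: "c i j k = - c j i k" for i j k using assms(1) unfolding lie_structure_constants_def by blast
  have sm: "iter_pd is f differentiable_on UNIV" for "is" using assms(2) unfolding smooth_def by blast
  have df: "f differentiable (at p)" for p using sm[of "[]"] by (simp add: differentiable_on_def)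
  have dfi: "pd i f differentiable (at p)" for i p using sm[of "[i]"] by (simp add: differentiable_on_def)
  have dfij: "pd j (pd i f) differentiable (at p)" for i j p using sm[of "[j,i]"] by (simp add: differentiable_on_def)
  have lpa: "lie_poisson c i j x = - lie_poisson c j i x" for i j x
    unfolding lie_poisson_def by (subst ca) (simp add: sum_negf)
  define G where "G x = (\<Sum>i\<in>UNIV. \<Sum>j\<in>UNIV. c i j j * pd i f x)" for x
  have vf0: "vf_apply (hamiltonian_vf c f) f x = 0" for x
  proof -
    have "vf_apply (hamiltonian_vf c f) f x
        = (\<Sum>j\<in>UNIV. \<Sum>i\<in>UNIV. lie_poisson c i j x * (pd i f x * pd j f x))"
      unfolding vf_apply_def hamiltonian_vf_def
      by (simp add: sum_distrib_right mult.assoc)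
    also have "\<dots> = 0"
      by (rule antisym_sum[where P="\<lambda>j i. lie_poisson c i j x" and F="\<lambda>j i. pd i f x * pd j f x"])
         (rule lpa, simp)
    finally show ?thesis .
  qed
  have dv: "divergence (hamiltonian_vf c f) x = G x" for x
  proof -
    have "divergence (hamiltonian_vf c f) x
       = (\<Sum>j\<in>UNIV. \<Sum>i\<in>UNIV. c i j j * pd i f x + lie_poisson c i j x * pd j (pd i f) x)"
      unfolding divergence_def using div_formula[OF dfi] by simp
    also have "\<dots> = (\<Sum>j\<in>UNIV. \<Sum>i\<in>UNIV. c i j j * pd i f x)
        + (\<Sum>j\<in>UNIV. \<Sum>i\<in>UNIV. lie_poisson c i j x * pd j (pd i f) x)"
      by (simp add: sum.distrib)
    also have "(\<Sum>j\<in>UNIV. \<Sum>i\<in>UNIV. lie_poisson c i j x * pd j (pd i f) x) = 0"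
      by (rule antisym_sum[where P="\<lambda>j i. lie_poisson c i j x" and F="\<lambda>j i. pd j (pd i f) x"])
         (rule lpa, rule schwarz[OF df dfi dfij])
    also have "(\<Sum>j\<in>UNIV. \<Sum>i\<in>UNIV. c i j j * pd i f x) = G x"
      unfolding G_def by (rule sum.swap)
    finally show ?thesis by simp
  qed
  have lm: "last_multiplier (hamiltonian_vf c f) f \<longleftrightarrow> (\<forall>x. f x * G x = 0)"
    unfolding last_multiplier_def using vf0 dv by simp
  have Ga: "G x = (\<Sum>i\<in>UNIV. (\<Sum>j\<in>UNIV. c i j j) * pd i f x)" for x
    unfolding G_def by (simp add: sum_distrib_right)
  show ?thesis
  proof
    assume "last_multiplier (hamiltonian_vf c f) f"
    then have "\<forall>x. f x * (\<Sum>i\<in>UNIV. (\<Sum>j\<in>UNIV. c i j j) * pd i f x) = 0" using lm Ga by simp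
    then have "(\<Sum>i\<in>UNIV. (\<Sum>j\<in>UNIV. c i j j) * pd i f x) = 0" for x
      by (intro zero_region[OF dfi, of "\<lambda>i. \<Sum>j\<in>UNIV. c i j j"]) blast
    then show "\<forall>x. (\<Sum>i\<in>UNIV. \<Sum>j\<in>UNIV. c i j j * pd i f x) = 0"
      using Ga unfolding G_def by simp
  next
    assume "\<forall>x. (\<Sum>i\<in>UNIV. \<Sum>j\<in>UNIV. c i j j * pd i f x) = 0"
    then show "last_multiplier (hamiltonian_vf c f) f" using lm unfolding G_def by simp
  qed
qed

end
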